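(* Let $\mathcal{N}$ be an acyclic, weakly non-deterministic negotiation with a fixed topological order $\preceq$ of its graph, and let $C$ be a reachable configuration. Let $n$ be the $\preceq$-smallest node such that $C(d)=\{n\}$ for some deterministic process $d$. Then: (1) if $\mathcal{N}$ is sound, then $n$ is enabled in $C$; (2) for every run $C\xrightarrow{w}C_{\mathit{fin}}$, every node $n'$ occurring in $w$ satisfies $n\preceq n'$.
   Context: A negotiation is a tuple $\mathcal{N}=(\mathit{Proc},N,\mathit{dom},R,\delta)$ where $\mathit{Proc}$ is a finite set of processes, $N$ is a finite set of nodes, $\mathit{dom}:N\to 2^{\mathit{Proc}}\setminus\{\emptyset\}$, there are two distinguished nodes $n_{\mathit{init}},n_{\mathit{fin}}$ with $\mathit{dom}(n_{\mathit{init}})=\mathit{dom}(n_{\mathit{fin}})=\mathit{Proc}$, $R$ is a set of results, each node $n$ has a set $\mathit{out}(n)\subseteq R$ of results (nonempty for $n\neq n_{\mathit{fin}}$), and $\delta(n,a,p)\subseteq N$ is defined and nonempty exactly when $a\in\mathit{out}(n)$ and $p\in\mathit{dom}(n)$, with $p\in\mathit{dom}(n')$ for all $n'\in\delta(n,a,p)$. A configuration is a map $C$ assigning to each process a nonempty set of nodes; $C_{\mathit{init}}(p)=\{n_{\mathit{init}}\}$, $C_{\mathit{fin}}(p)=\{n_{\mathit{fin}}\}$. A node $n$ is enabled in $C$ if $n\in C(p)$ for all $p\in\mathit{dom}(n)$. If $n$ is enabled and $a\in\mathit{out}(n)$ then $C\xrightarrow{(n,a)}C'$ with $C'(p)=\delta(n,a,p)$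 for $p\in\mathit{dom}(n)$, $C'(p)=C(p)$ otherwise. A run is a sequence of such steps; a configuration is reachable if some finite run from $C_{\mathit{init}}$ leads to it; $\mathcal{N}$ is sound if every finite run from $C_{\mathit{init}}$ can be extended to a finite run ending in $C_{\mathit{fin}}$. The graph of $\mathcal{N}$ has vertex set $N$ and edges $n\to n'$ whenever $n'\in\delta(n,a,p)$ for some $a,p$; $\mathcal{N}$ is acyclic if this graph is, and a topological order is a linear order $\preceq$ on $N$ with $m\preceq n$ whenever there is an edge $m\to n$. A process $p$ is deterministic if $\delta(n,a,p)$ is a singleton for all $n$ with $p\in\mathit{dom}(n)$ and $a\in\mathit{out}(n)$; $\mathcal{N}$ is weakly non-deterministic if every node $n$ has a deterministic process in $\mathit{dom}(n)$. *)

theory Defs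
  imports Main
begin

record ('p, 'n, 'r) negotiation =
  procs :: "'p set"
  nodes :: "'n set"
  ndom :: "'n \<Rightarrow> 'p set"
  n_init :: 'n
  n_fin :: 'n
  results :: "'r set"
  out :: "'n \<Rightarrow> 'r set"
  delta :: "'n \<Rightarrow> 'r \<Rightarrow> 'p \<Rightarrow> 'n set"

definition is_negotiation :: "('p, 'n, 'r) negotiation \<Rightarrow> bool" where
  "is_negotiation \<N> \<longleftrightarrow>
     finite (procs \<N>) \<and> finite (nodes \<N>) \<and>
     (\<forall>n\<in>nodes \<N>. ndom \<N> n \<subseteq> procs \<N> \<and> ndom \<N> n \<noteq> {}) \<and>
     n_init \<N> \<in> nodes \<N> \<and> n_fin \<N> \<in> nodes \<N> \<and>
     ndom \<N> (n_init \<N>) = procs \<N> \<and> ndom \<N> (n_fin \<N>) = procs \<N> \<and>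
     (\<forall>n\<in>nodes \<N>. out \<N> n \<subseteq> results \<N>) \<and>
     (\<forall>n\<in>nodes \<N>. n \<noteq> n_fin \<N> \<longrightarrow> out \<N> n \<noteq> {}) \<and>
     (\<forall>n\<in>nodes \<N>. \<forall>a\<in>out \<N> n. \<forall>p\<in>ndom \<N> n.
        delta \<N> n a p \<noteq> {} \<and> delta \<N> n a p \<subseteq> nodes \<N> \<and>
        (\<forall>n'\<in>delta \<N> n a p. p \<in> ndom \<N> n'))"

type_synonym ('p, 'n) config = "'p \<Rightarrow> 'n set"

definition C_init :: "('p, 'n, 'r) negotiation \<Rightarrow> ('p, 'n) config" where
  "C_init \<N> = (\<lambda>p. {n_init \<N>})"

definition C_fin :: "('p, 'n, 'r) negotiation \<Rightarrow> ('p, 'n) config" where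
  "C_fin \<N> = (\<lambda>p. {n_fin \<N>})"

definition enabled :: "('p, 'n, 'r) negotiation \<Rightarrow> ('p, 'n) config \<Rightarrow> 'n \<Rightarrow> bool" where
  "enabled \<N> C n \<longleftrightarrow> n \<in> nodes \<N> \<and> (\<forall>p\<in>ndom \<N> n. n \<in> C p)"

definition step :: "('p, 'n, 'r) negotiation \<Rightarrow> ('p, 'n) config \<Rightarrow> 'n \<times> 'r \<Rightarrow> ('p, 'n) config \<Rightarrow> bool" where
  "step \<N> C na C' \<longleftrightarrow> (case na of (n, a) \<Rightarrow>
     enabled \<N> C n \<and> a \<in> out \<N> n \<and>
     C' = (\<lambda>p. if p \<in> ndom \<N> n then delta \<N> n a p else C p))"

inductive run :: "('p, 'n, 'r) negotiation \<Rightarrow> ('p, 'n) config \<Rightarrow> ('n \<times> 'r) list \<Rightarrow> ('p, 'n) config \<Rightarrow> bool"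
  for \<N> where
  run_Nil: "run \<N> C [] C"
| run_Cons: "step \<N> C na C' \<Longrightarrow> run \<N> C' w C'' \<Longrightarrow> run \<N> C (na # w) C''"

definition reachable :: "('p, 'n, 'r) negotiation \<Rightarrow> ('p, 'n) config \<Rightarrow> bool" where
  "reachable \<N> C \<longleftrightarrow> (\<exists>w. run \<N> (C_init \<N>) w C)"

definition sound :: "('p, 'n, 'r) negotiation \<Rightarrow> bool" where
  "sound \<N> \<longleftrightarrow> (\<forall>w C. run \<N> (C_init \<N>) w C \<longrightarrow> (\<exists>w'. run \<N> C w' (C_fin \<N>)))"

definition edges :: "('p, 'n, 'r) negotiation \<Rightarrow> ('n \<times> 'n) set" where
  "edges \<N> = {(n, n'). n \<in> nodes \<N> \<and> (\<exists>a\<in>out \<N> n. \<exists>p\<in>ndom \<N> n. n' \<in> delta \<N> n a p)}"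

definition acyclic_neg :: "('p, 'n, 'r) negotiation \<Rightarrow> bool" where
  "acyclic_neg \<N> \<longleftrightarrow> acyclic (edges \<N>)"

definition topological_order :: "('p, 'n, 'r) negotiation \<Rightarrow> ('n \<times> 'n) set \<Rightarrow> bool" where
  "topological_order \<N> le \<longleftrightarrow> linear_order_on (nodes \<N>) le \<and> edges \<N> \<subseteq> le"

definition deterministic :: "('p, 'n, 'r) negotiation \<Rightarrow> 'p \<Rightarrow> bool" where
  "deterministic \<N> p \<longleftrightarrow> p \<in> procs \<N> \<and>
     (\<forall>n\<in>nodes \<N>. p \<in> ndom \<N> n \<longrightarrow> (\<forall>a\<in>out \<N> n. is_singleton (delta \<N> n a p)))"

definition weakly_nondeterministic :: "('p, 'n, 'r) negotiation \<Rightarrow> bool" where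
  "weakly_nondeterministic \<N> \<longleftrightarrow> (\<forall>n\<in>nodes \<N>. \<exists>d\<in>ndom \<N> n. deterministic \<N> d)"

end

theory Submission
  imports Defs
begin

lemma det_singleton_run:
  assumes "run N C0 w C" "deterministic N d" "is_singleton (C0 d)"
  shows "is_singleton (C d)"
  using assms
proof (induction rule: run.induct)
  case (run_Nil C)
  then show ?case by simp
next
  case (run_Cons C na C' w C'')
  obtain m a where na: "na = (m, a)" by (cases na)
  have "is_singleton (C' d)"
    using run_Cons.hyps(1) run_Cons.prems unfolding na step_def enabled_def deterministic_def
    by auto
  then show ?case using run_Cons.IH run_Cons.prems by blast
qed

lemma part2_gen:
  assumes "run N C' w C''"
    and "\<forall>d. deterministic N d \<longrightarrow> (\<forall>m\<in>C' d. (n, m) \<in> le)"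
    and "weakly_nondeterministic N" and "edges N \<subseteq> le" and "trans le"
  shows "\<forall>(n', a) \<in> set w. (n, n') \<in> le"
  using assms
proof (induction rule: run.induct)
  case (run_Nil C)
  then show ?case by simp
next
  case (run_Cons C na C1 w C'')
  obtain m a where na: "na = (m, a)" by (cases na)
  have en: "enabled N C m" and a: "a \<in> out N m"
    and C1: "C1 = (\<lambda>p. if p \<in> ndom N m then delta N m a p else C p)"
    using run_Cons.hyps(1) unfolding na step_def by auto
  have mn: "m \<in> nodes N" using en unfolding enabled_def by auto
  then obtain d where d: "d \<in> ndom N m" "deterministic N d"
    using run_Cons.prems(2) unfolding weakly_nondeterministic_def by auto
  have "m \<in> C d" using en d unfolding enabled_def by auto
  hence nm: "(n, m) \<in> le" using run_Cons.prems(1) d by auto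
  have "\<forall>d. deterministic N d \<longrightarrow> (\<forall>m'\<in>C1 d. (n, m') \<in> le)"
  proof (intro allI impI ballI)
    fix d' m' assume dd: "deterministic N d'" "m' \<in> C1 d'"
    show "(n, m') \<in> le"
    proof (cases "d' \<in> ndom N m")
      case True
      then have "(m, m') \<in> edges N" using dd mn a C1 unfolding edges_def by auto
      then have "(m, m') \<in> le" using run_Cons.prems(3) by auto
      then show ?thesis using nm run_Cons.prems(4) by (meson transD)
    next
      case False
      then show ?thesis using dd C1 run_Cons.prems(1) by auto
    qed
  qed
  then have "\<forall>(n', a) \<in> set w. (n, n') \<in> le" using run_Cons.IH run_Cons.prems by blast
  then show ?case using nm na by auto
qed

lemma back_gen:
  assumes "run N C' w C''"
    and "\<forall>(m, a) \<in> set w. m \<noteq> n \<and> (n, m) \<in> le"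
    and "edges N \<subseteq> le" and "antisym le"
    and "n \<in> C'' p"
  shows "n \<in> C' p"
  using assms
proof (induction rule: run.induct)
  case (run_Nil C)
  then show ?case by simp
next
  case (run_Cons C na C1 w C'')
  obtain m a where na: "na = (m, a)" by (cases na)
  have en: "enabled N C m" and a: "a \<in> out N m"
    and C1: "C1 = (\<lambda>p. if p \<in> ndom N m then delta N m a p else C p)"
    using run_Cons.hyps(1) unfolding na step_def by auto
  have mn: "m \<in> nodes N" using en unfolding enabled_def by auto
  have h: "m \<noteq> n" "(n, m) \<in> le" using run_Cons.prems(1) na by auto
  have "n \<in> C1 p" using run_Cons.IH run_Cons.prems by auto
  show ?case
  proof (cases "p \<in> ndom N m")
    case True
    then have "(m, n) \<in> edges N" using \<open>n \<in> C1 p\<close> mn a C1 unfolding edges_def by auto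
    then have "(m, n) \<in> le" using run_Cons.prems(2) by auto
    then show ?thesis using h run_Cons.prems(3) by (meson antisymD)
  next
    case False
    then show ?thesis using \<open>n \<in> C1 p\<close> C1 by auto
  qed
qed

lemma stay_gen:
  assumes "run N C' w C''"
    and "\<forall>(m, a) \<in> set w. m \<noteq> n"
    and "C' d = {n}"
  shows "C'' d = {n}"
  using assms
proof (induction rule: run.induct)
  case (run_Nil C)
  then show ?case by simp
next
  case (run_Cons C na C1 w C'')
  obtain m a where na: "na = (m, a)" by (cases na)
  have en: "enabled N C m"
    and C1: "C1 = (\<lambda>p. if p \<in> ndom N m then delta N m a p else C p)"
    using run_Cons.hyps(1) unfolding na step_def by auto
  have "m \<noteq> n" using run_Cons.prems na by auto
  then have "d \<notin> ndom N m" using en run_Cons.prems(2) unfolding enabled_def by auto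
  then have "C1 d = {n}" using C1 run_Cons.prems(2) by auto
  then show ?case using run_Cons.IH run_Cons.prems by auto
qed

lemma run_append_split:
  assumes "run N C (w1 @ w2) C''"
  shows "\<exists>C2. run N C w1 C2 \<and> run N C2 w2 C''"
  using assms
proof (induction w1 arbitrary: C)
  case Nil
  then show ?case by (auto intro: run.run_Nil)
next
  case (Cons x w1)
  from Cons.prems obtain C1 where "step N C x C1" "run N C1 (w1 @ w2) C''"
    by (auto elim: run.cases)
  then show ?case using Cons.IH by (meson run.run_Cons)
qed

theorem lemma4p7:
  fixes \<N> :: "('p, 'n, 'r) negotiation"
    and le :: "('n \<times> 'n) set"
    and C :: "('p, 'n) config"
    and n :: 'n
  assumes "is_negotiation \<N>"
    and "acyclic_neg \<N>"
    and "weakly_nondeterministic \<N>"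
    and "topological_order \<N> le"
    and "reachable \<N> C"
    and "\<exists>d. deterministic \<N> d \<and> C d = {n}"
    and "\<And>m. (\<exists>d. deterministic \<N> d \<and> C d = {m}) \<Longrightarrow> (n, m) \<in> le"
  shows "(sound \<N> \<longrightarrow> enabled \<N> C n)
       \<and> (\<forall>w. run \<N> C w (C_fin \<N>) \<longrightarrow> (\<forall>(n', a) \<in> set w. (n, n') \<in> le))"
proof -
  have lin: "linear_order_on (nodes \<N>) le" and ed: "edges \<N> \<subseteq> le"
    using assms(4) unfolding topological_order_def by auto
  have tr: "trans le" and an: "antisym le"
    using lin unfolding linear_order_on_def partial_order_on_def preorder_on_def by auto
  obtain w0 where w0: "run \<N> (C_init \<N>) w0 C" using assms(5) unfolding reachable_def by auto
  have inv: "\<forall>d. deterministic \<N> d \<longrightarrow> (\<forall>m\<in>C d. (n, m) \<in> le)"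
  proof (intro allI impI ballI)
    fix d m assume d: "deterministic \<N> d" "m \<in> C d"
    have "is_singleton (C d)"
      using det_singleton_run[OF w0 d(1)] by (simp add: C_init_def)
    then have "C d = {m}" using d(2) by (auto simp: is_singleton_def)
    then show "(n, m) \<in> le" using assms(7) d(1) by blast
  qed
  have P2: "\<forall>w C''. run \<N> C w C'' \<longrightarrow> (\<forall>(n', a) \<in> set w. (n, n') \<in> le)"
    using part2_gen[OF _ inv assms(3) ed tr] by blast
  have P1: "enabled \<N> C n" if snd: "sound \<N>"
  proof -
    obtain w' where w': "run \<N> C w' (C_fin \<N>)" using snd w0 unfolding sound_def by blast
    define w1 where "w1 = takeWhile (\<lambda>x. fst x \<noteq> n) w'"
    define w2 where "w2 = dropWhile (\<lambda>x. fst x \<noteq> n) w'"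
    have "w' = w1 @ w2" unfolding w1_def w2_def by simp
    then obtain C2 where r1: "run \<N> C w1 C2" and r2: "run \<N> C2 w2 (C_fin \<N>)"
      using run_append_split w' by metis
    have w1n: "\<forall>(m, a) \<in> set w1. m \<noteq> n" unfolding w1_def
      by (auto dest: set_takeWhileD)
    have w1le: "\<forall>(m, a) \<in> set w1. (n, m) \<in> le"
      using P2 r1 by blast
    have bk: "\<And>p. n \<in> C2 p \<Longrightarrow> n \<in> C p"
      using back_gen[OF r1 _ ed an] w1n w1le by blast
    obtain d where d: "deterministic \<N> d" "C d = {n}" using assms(6) by auto
    show ?thesis
    proof (cases w2)
      case Nil
      then have "C2 = C_fin \<N>" using r2 by (auto elim: run.cases)
      moreover have "C2 d = {n}" using stay_gen[OF r1 w1n d(2)] .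
      ultimately have nf: "n = n_fin \<N>" by (simp add: C_fin_def)
      have "n \<in> nodes \<N>" using nf assms(1) unfolding is_negotiation_def by auto
      moreover have "\<And>p. n \<in> C p" using bk \<open>C2 = C_fin \<N>\<close> nf by (simp add: C_fin_def)
      ultimately show ?thesis unfolding enabled_def by auto
    next
      case (Cons x rest)
      then have "fst x = n" unfolding w2_def
        by (metis (mono_tags, lifting) dropWhile_eq_Cons_conv)
      moreover obtain C3 where "step \<N> C2 x C3" using r2 Cons by (auto elim: run.cases)
      ultimately have "enabled \<N> C2 n" unfolding step_def by (cases x) auto
      then show ?thesis using bk unfolding enabled_def by auto
    qed
  qed
  show ?thesis using P1 P2 by blast
qed

end
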